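(* Let $\mathcal{G}=(\mathcal{V},\mathcal{E})$ be an undirected graph with nodes $1,\dots,n$ and edges indexed $1,\dots,E$, and let $\mathcal{S}_i$ be the set of edges incident to node $i$. For every $z\in\mathbb{R}^E$, $$\left(\|z\|_{\mathrm{SM}}^*\right)^2\ge\frac12\left(\|z\|_{\mathrm{SMNO}}^*\right)^2.$$
   Context: Convention: a maximum over an empty set is $0$. Define $\|x\|_{\mathrm{SM}}=\sqrt{\sum_{i=1}^n\max_{j\in\mathcal{S}_i}x_j^2}$ on $\mathbb{R}^E$ and its dual norm $\|z\|_{\mathrm{SM}}^*=\sup_x\{z^Tx:\|x\|_{\mathrm{SM}}\le1\}$. An assignment is a choice, for each edge $\ell\equiv(i,j)$, of exactly one of its two endpoints; it yields pairwise disjoint sets $\mathcal{S}_i'\subseteq\mathcal{S}_i$ (possibly empty) whose union is all edges, where $\mathcal{S}_i'$ is the set of edges assigned to $i$. For $x\in\mathbb{R}^E$ let $\varphi(x)=\max$ over all assignments of $\sum_{i=1}^n\max_{\ell\in\mathcal{S}_i'}x_\ell^2$ (the maximizing assignment $\{\mathcal{S}_i^*\}$ depends on $x$). Then $\|z\|_{\mathrm{SMNO}}^*=\sup_x\{z^Tx:\sqrt{\varphi(x)}\le1\}$, i.e. the supremum of $z^Tx$ over $x$ subject to $\sqrt{\sum_i\max_{\ell\in\mathcal{S}_i^*}x_\ell^2}\le1$ with $\{\mathcal{S}^*_i\}$ the assignment maximizing $\sum_i\max_{\ell\in\mathcal{S}_i'}x_\ell^2$. *)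

theory Defs
  imports Complex_Main
begin

definition valid_graph :: "nat \<Rightarrow> nat \<Rightarrow> (nat \<Rightarrow> nat \<times> nat) \<Rightarrow> bool" where
  "valid_graph n E ends \<longleftrightarrow>
     (\<forall>l\<in>{1..E}. fst (ends l) \<in> {1..n} \<and> snd (ends l) \<in> {1..n} \<and> fst (ends l) \<noteq> snd (ends l))"

definition incident :: "nat \<Rightarrow> (nat \<Rightarrow> nat \<times> nat) \<Rightarrow> nat \<Rightarrow> nat set" where
  "incident E ends i = {l \<in> {1..E}. fst (ends l) = i \<or> snd (ends l) = i}"

definition maxsq :: "nat set \<Rightarrow> (nat \<Rightarrow> real) \<Rightarrow> real" where
  "maxsq A x = (if A = {} then 0 else Max ((\<lambda>l. (x l)^2) ` A))"

definition sm_norm :: "nat \<Rightarrow> nat \<Rightarrow> (nat \<Rightarrow> nat \<times> nat) \<Rightarrow> (nat \<Rightarrow> real) \<Rightarrow> real" where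
  "sm_norm n E ends x = sqrt (\<Sum>i=1..n. maxsq (incident E ends i) x)"

definition is_assignment :: "nat \<Rightarrow> (nat \<Rightarrow> nat \<times> nat) \<Rightarrow> (nat \<Rightarrow> nat) \<Rightarrow> bool" where
  "is_assignment E ends a \<longleftrightarrow> (\<forall>l\<in>{1..E}. a l = fst (ends l) \<or> a l = snd (ends l))"

definition assigned :: "nat \<Rightarrow> (nat \<Rightarrow> nat) \<Rightarrow> nat \<Rightarrow> nat set" where
  "assigned E a i = {l \<in> {1..E}. a l = i}"

definition phi :: "nat \<Rightarrow> nat \<Rightarrow> (nat \<Rightarrow> nat \<times> nat) \<Rightarrow> (nat \<Rightarrow> real) \<Rightarrow> real" where
  "phi n E ends x = Sup {(\<Sum>i=1..n. maxsq (assigned E a i) x) | a. is_assignment E ends a}"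

definition smno_norm :: "nat \<Rightarrow> nat \<Rightarrow> (nat \<Rightarrow> nat \<times> nat) \<Rightarrow> (nat \<Rightarrow> real) \<Rightarrow> real" where
  "smno_norm n E ends x = sqrt (phi n E ends x)"

definition dual :: "nat \<Rightarrow> ((nat \<Rightarrow> real) \<Rightarrow> real) \<Rightarrow> (nat \<Rightarrow> real) \<Rightarrow> real" where
  "dual E N z = Sup {(\<Sum>l=1..E. z l * x l) | x. N x \<le> 1}"

end

theory Submission
  imports Defs
begin

lemma maxsq_ge: "finite A \<Longrightarrow> l \<in> A \<Longrightarrow> (x l)^2 \<le> maxsq A x"
  unfolding maxsq_def by (auto intro: Max_ge)

lemma maxsq_nonneg: "finite A \<Longrightarrow> maxsq A x \<ge> 0"
proof (cases "A = {}")
  case False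
  assume "finite A"
  then obtain l where "l \<in> A" using False by blast
  then have "(x l)^2 \<le> maxsq A x" using \<open>finite A\<close> by (rule_tac maxsq_ge) auto
  then show ?thesis using zero_le_power2[of "x l"] by linarith
qed (simp add: maxsq_def)

lemma maxsq_attained: "finite A \<Longrightarrow> A \<noteq> {} \<Longrightarrow> \<exists>l\<in>A. (x l)^2 = maxsq A x"
proof -
  assume "finite A" "A \<noteq> {}"
  then have "Max ((\<lambda>l. (x l)^2) ` A) \<in> (\<lambda>l. (x l)^2) ` A" by (intro Max_in) auto
  then show ?thesis using \<open>A \<noteq> {}\<close> unfolding maxsq_def by force
qed

lemma maxsq_mono: "finite B \<Longrightarrow> A \<subseteq> B \<Longrightarrow> maxsq A x \<le> maxsq B x"
proof (cases "A = {}")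
  case True
  assume "finite B" "A \<subseteq> B"
  then show ?thesis using True maxsq_nonneg[of B x] by (simp add: maxsq_def)
next
  case False
  assume "finite B" "A \<subseteq> B"
  then have "finite A" by (rule finite_subset[rotated])
  obtain l where "l \<in> A" "(x l)^2 = maxsq A x" using maxsq_attained[OF \<open>finite A\<close> False] by blast
  then show ?thesis using maxsq_ge[OF \<open>finite B\<close>, of l x] \<open>A \<subseteq> B\<close> by auto
qed

lemma maxsq_scale: "finite A \<Longrightarrow> maxsq A (\<lambda>l. c * x l) = c^2 * maxsq A x"
proof (cases "A = {}")
  case False
  assume fA: "finite A"
  have m: "mono (\<lambda>t. c^2 * (t::real))"
    by (rule monoI) (simp add: mult_left_mono)
  have f2: "finite ((\<lambda>l. (x l)^2) ` A)" using fA by simp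
  have ne: "(\<lambda>l. (x l)^2) ` A \<noteq> {}" using False by simp
  have "c^2 * Max ((\<lambda>l. (x l)^2) ` A) = Max ((\<lambda>t. c^2 * t) ` ((\<lambda>l. (x l)^2) ` A))"
    by (rule mono_Max_commute[OF m f2 ne])
  also have "(\<lambda>t. c^2 * t) ` ((\<lambda>l. (x l)^2) ` A) = (\<lambda>l. (c * x l)^2) ` A"
    unfolding image_image by (simp add: power_mult_distrib)
  finally show ?thesis using False unfolding maxsq_def by simp
qed (simp add: maxsq_def)

lemma maxsq_zero: "maxsq A (\<lambda>_. 0) = 0"
proof (cases "A = {}")
  case False
  then have "(\<lambda>l. (0::real)^2) ` A = {0}" by auto
  then show ?thesis by (simp add: maxsq_def)
qed (simp add: maxsq_def)

lemma incident_finite: "finite (incident E ends i)"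
  unfolding incident_def by auto

lemma assigned_sub: "is_assignment E ends a \<Longrightarrow> assigned E a i \<subseteq> incident E ends i"
proof
  fix l assume a: "is_assignment E ends a" and l: "l \<in> assigned E a i"
  then have "l \<in> {1..E}" "a l = i" unfolding assigned_def by auto
  moreover have "a l = fst (ends l) \<or> a l = snd (ends l)"
    using a \<open>l \<in> {1..E}\<close> unfolding is_assignment_def by blast
  ultimately show "l \<in> incident E ends i" unfolding incident_def by auto
qed

definition SS :: "nat \<Rightarrow> nat \<Rightarrow> (nat \<Rightarrow> nat \<times> nat) \<Rightarrow> (nat \<Rightarrow> real) \<Rightarrow> real" where
  "SS n E ends x = (\<Sum>i=1..n. maxsq (incident E ends i) x)"

lemma SS_nonneg: "SS n E ends x \<ge> 0"
  unfolding SS_def by (intro sum_nonneg maxsq_nonneg incident_finite)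

lemma assign_le_SS: "is_assignment E ends a \<Longrightarrow>
   (\<Sum>i=1..n. maxsq (assigned E a i) x) \<le> SS n E ends x"
  unfolding SS_def by (intro sum_mono maxsq_mono incident_finite assigned_sub)

lemma fst_assignment: "is_assignment E ends (\<lambda>l. fst (ends l))"
  unfolding is_assignment_def by auto

lemma phi_set_ne: "{(\<Sum>i=1..n. maxsq (assigned E a i) x) | a. is_assignment E ends a} \<noteq> {}"
  using fst_assignment by blast

lemma phi_set_bdd: "bdd_above {(\<Sum>i=1..n. maxsq (assigned E a i) x) | a. is_assignment E ends a}"
proof (rule bdd_aboveI[of _ "SS n E ends x"])
  fix t assume "t \<in> {(\<Sum>i=1..n. maxsq (assigned E a i) x) | a. is_assignment E ends a}"
  then obtain a where "t = (\<Sum>i=1..n. maxsq (assigned E a i) x)" "is_assignment E ends a"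
    by blast
  then show "t \<le> SS n E ends x" using assign_le_SS[where a=a and n=n and x=x and E=E and ends=ends] by simp
qed

lemma phi_le_SS: "phi n E ends x \<le> SS n E ends x"
  unfolding phi_def
proof (rule cSup_least[OF phi_set_ne])
  fix t assume "t \<in> {(\<Sum>i=1..n. maxsq (assigned E a i) x) | a. is_assignment E ends a}"
  then obtain a where "t = (\<Sum>i=1..n. maxsq (assigned E a i) x)" "is_assignment E ends a"
    by blast
  then show "t \<le> SS n E ends x" using assign_le_SS[where a=a and n=n and x=x and E=E and ends=ends] by simp
qed

lemma phi_ge: "is_assignment E ends a \<Longrightarrow> (\<Sum>i=1..n. maxsq (assigned E a i) x) \<le> phi n E ends x"
  unfolding phi_def by (rule cSup_upper[OF _ phi_set_bdd]) (rule CollectI, rule exI, rule conjI[OF refl])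

lemma key:
  assumes vg: "valid_graph n E ends"
  shows "\<exists>a. is_assignment E ends a \<and> SS n E ends x \<le> 2 * (\<Sum>i=1..n. maxsq (assigned E a i) x)"
proof -
  define I where "I = {i\<in>{1..n}. incident E ends i \<noteq> {}}"
  define lf where "lf i = (SOME l. l \<in> incident E ends i \<and> (x l)^2 = maxsq (incident E ends i) x)" for i
  have lf: "lf i \<in> incident E ends i \<and> (x (lf i))^2 = maxsq (incident E ends i) x" if "i \<in> I" for i
  proof -
    have "\<exists>l. l \<in> incident E ends i \<and> (x l)^2 = maxsq (incident E ends i) x"
      using maxsq_attained[OF incident_finite, of E ends i x] that unfolding I_def by auto
    then show ?thesis unfolding lf_def by (rule someI_ex)
  qed
  define L where "L = lf ` I"
  define a where "a l = (if l \<in> L then (SOME i. i \<in> I \<and> lf i = l) else fst (ends l))" for l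
  have aL: "a l \<in> I \<and> lf (a l) = l" if "l \<in> L" for l
  proof -
    have "\<exists>i. i \<in> I \<and> lf i = l" using that unfolding L_def by auto
    then have "(SOME i. i \<in> I \<and> lf i = l) \<in> I \<and> lf (SOME i. i \<in> I \<and> lf i = l) = l" by (rule someI_ex)
    then show ?thesis using that unfolding a_def by simp
  qed
  have finI: "finite I" unfolding I_def by auto
  have finL: "finite L" unfolding L_def using finI by auto
  have LE: "L \<subseteq> {1..E}" unfolding L_def using lf unfolding incident_def by force
  have isa: "is_assignment E ends a"
    unfolding is_assignment_def
  proof
    fix l assume "l \<in> {1..E}"
    show "a l = fst (ends l) \<or> a l = snd (ends l)"
    proof (cases "l \<in> L")
      case True
      then have "lf (a l) \<in> incident E ends (a l)" using aL lf by blast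
      then show ?thesis using aL[OF True] unfolding incident_def by auto
    next
      case False then show ?thesis unfolding a_def by simp
    qed
  qed
  have "SS n E ends x = (\<Sum>i\<in>{1..n}. if i \<in> I then (x (lf i))^2 else 0)"
    unfolding SS_def by (rule sum.cong) (auto simp: I_def maxsq_def lf)
  also have "\<dots> = (\<Sum>i\<in>I. (x (lf i))^2)"
    by (simp add: sum.If_cases I_def) (rule sum.cong, auto)
  also have "\<dots> = (\<Sum>l\<in>L. \<Sum>i\<in>{i\<in>I. lf i = l}. (x (lf i))^2)"
    unfolding L_def by (rule sum.image_gen[OF finI])
  also have "\<dots> = (\<Sum>l\<in>L. real (card {i\<in>I. lf i = l}) * (x l)^2)"
    by (rule sum.cong) auto
  also have "\<dots> \<le> (\<Sum>l\<in>L. 2 * (x l)^2)"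
  proof (rule sum_mono)
    fix l assume "l \<in> L"
    have "{i\<in>I. lf i = l} \<subseteq> {fst (ends l), snd (ends l)}"
      using lf unfolding incident_def by force
    then have "card {i\<in>I. lf i = l} \<le> card {fst (ends l), snd (ends l)}"
      by (intro card_mono) auto
    also have "\<dots> \<le> 2" by (simp add: card_insert_if)
    finally have "real (card {i\<in>I. lf i = l}) \<le> 2" by simp
    then show "real (card {i\<in>I. lf i = l}) * (x l)^2 \<le> 2 * (x l)^2"
      by (intro mult_right_mono) auto
  qed
  also have "\<dots> = 2 * (\<Sum>l\<in>L. (x l)^2)" by (simp add: sum_distrib_left)
  finally have part1: "SS n E ends x \<le> 2 * (\<Sum>l\<in>L. (x l)^2)" .
  have "(\<Sum>l\<in>L. (x l)^2) \<le> (\<Sum>l\<in>L. maxsq (assigned E a (a l)) x)"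
  proof (rule sum_mono)
    fix l assume "l \<in> L"
    then have "l \<in> assigned E a (a l)" using LE unfolding assigned_def by auto
    then show "(x l)^2 \<le> maxsq (assigned E a (a l)) x"
      by (rule maxsq_ge[rotated]) (simp add: assigned_def)
  qed
  also have "(\<Sum>l\<in>L. maxsq (assigned E a (a l)) x) = (\<Sum>i\<in>a ` L. maxsq (assigned E a i) x)"
  proof -
    have "inj_on a L" by (rule inj_onI) (metis aL)
    then show ?thesis by (simp add: sum.reindex)
  qed
  also have "\<dots> \<le> (\<Sum>i=1..n. maxsq (assigned E a i) x)"
  proof (rule sum_mono2)
    show "a ` L \<subseteq> {1..n}" using aL unfolding I_def by auto
  qed (auto intro: maxsq_nonneg simp: assigned_def)
  finally have "(\<Sum>l\<in>L. (x l)^2) \<le> (\<Sum>i=1..n. maxsq (assigned E a i) x)" .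
  then have "SS n E ends x \<le> 2 * (\<Sum>i=1..n. maxsq (assigned E a i) x)" using part1 by linarith
  then show ?thesis using isa by blast
qed

lemma SS_le_phi: "valid_graph n E ends \<Longrightarrow> SS n E ends x \<le> 2 * phi n E ends x"
proof -
  assume "valid_graph n E ends"
  then obtain a where "is_assignment E ends a" "SS n E ends x \<le> 2 * (\<Sum>i=1..n. maxsq (assigned E a i) x)"
    using key[of n E ends x] by blast
  then show ?thesis using phi_ge[where a=a and n=n and x=x and E=E and ends=ends] by linarith
qed

theorem lemma5:
  fixes n E :: nat and ends :: "nat \<Rightarrow> nat \<times> nat" and z :: "nat \<Rightarrow> real"
  assumes "valid_graph n E ends"
  shows "(dual E (sm_norm n E ends) z)^2 \<ge> 1/2 * (dual E (smno_norm n E ends) z)^2"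
proof -
  have vg: "valid_graph n E ends" by fact
  define D1 where "D1 = {(\<Sum>l=1..E. z l * x l) | x. sm_norm n E ends x \<le> 1}"
  define D2 where "D2 = {(\<Sum>l=1..E. z l * x l) | x. smno_norm n E ends x \<le> 1}"
  have sm0: "SS n E ends (\<lambda>_. 0) = 0"
    unfolding SS_def by (simp add: maxsq_zero)
  have "0 \<in> D1" unfolding D1_def sm_norm_def
    using sm0 unfolding SS_def by (auto intro!: exI[of _ "\<lambda>_. 0"])
  have bdd1: "bdd_above D1"
  proof (rule bdd_aboveI[of _ "\<Sum>l=1..E. \<bar>z l\<bar>"])
    fix t assume "t \<in> D1"
    then obtain x where t: "t = (\<Sum>l=1..E. z l * x l)" and sx: "sm_norm n E ends x \<le> 1"
      unfolding D1_def by auto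
    have S1: "SS n E ends x \<le> 1" using sx unfolding sm_norm_def SS_def by simp
    have "z l * x l \<le> \<bar>z l\<bar>" if l: "l \<in> {1..E}" for l
    proof -
      let ?i = "fst (ends l)"
      have i: "?i \<in> {1..n}" using vg l unfolding valid_graph_def by auto
      have "(x l)^2 \<le> maxsq (incident E ends ?i) x"
        using l by (intro maxsq_ge incident_finite) (auto simp: incident_def)
      also have "\<dots> \<le> SS n E ends x" unfolding SS_def
        by (rule member_le_sum[OF i]) (auto intro: maxsq_nonneg incident_finite)
      finally have "(x l)^2 \<le> 1" using S1 by simp
      then have "\<bar>x l\<bar> \<le> 1" by (simp add: abs_square_le_1)
      then have "\<bar>z l\<bar> * \<bar>x l\<bar> \<le> \<bar>z l\<bar>" by (simp add: mult_left_le)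
      moreover have "z l * x l \<le> \<bar>z l * x l\<bar>" by (rule abs_ge_self)
      ultimately show ?thesis by (simp add: abs_mult)
    qed
    then show "t \<le> (\<Sum>l=1..E. \<bar>z l\<bar>)" unfolding t by (intro sum_mono) auto
  qed
  have d1nn: "0 \<le> dual E (sm_norm n E ends) z"
    unfolding dual_def D1_def[symmetric] using cSup_upper[OF \<open>0 \<in> D1\<close> bdd1] .
  have ub: "t \<le> sqrt 2 * dual E (sm_norm n E ends) z" if tD: "t \<in> D2" for t
  proof -
    obtain x where t: "t = (\<Sum>l=1..E. z l * x l)" and sx: "smno_norm n E ends x \<le> 1"
      using tD unfolding D2_def by blast
    have p1: "phi n E ends x \<le> 1" using sx unfolding smno_norm_def by simp
    define y where "y l = (1 / sqrt 2) * x l" for l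
    have "SS n E ends y = (1 / sqrt 2)^2 * SS n E ends x"
      unfolding SS_def y_def sum_distrib_left by (rule sum.cong[OF refl], rule maxsq_scale[OF incident_finite])
    also have "\<dots> = SS n E ends x / 2" by (simp add: power_divide)
    also have "\<dots> \<le> 1" using SS_le_phi[OF vg, of x] p1 by simp
    finally have "sm_norm n E ends y \<le> 1" unfolding sm_norm_def SS_def[symmetric] by simp
    then have "(\<Sum>l=1..E. z l * y l) \<in> D1" unfolding D1_def by blast
    then have "(\<Sum>l=1..E. z l * y l) \<le> dual E (sm_norm n E ends) z"
      unfolding dual_def D1_def[symmetric] by (rule cSup_upper[OF _ bdd1])
    moreover have "t = sqrt 2 * (\<Sum>l=1..E. z l * y l)"
      unfolding t y_def sum_distrib_left by (rule sum.cong) auto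
    ultimately show ?thesis by (simp add: mult_left_mono)
  qed
  have "0 \<in> D2" unfolding D2_def smno_norm_def
    using phi_le_SS[of n E ends "\<lambda>_. 0"] sm0 by (auto intro!: exI[of _ "\<lambda>_. 0"])
  have bdd2: "bdd_above D2" by (rule bdd_aboveI[of _ "sqrt 2 * dual E (sm_norm n E ends) z"]) (rule ub)
  have d2nn: "0 \<le> dual E (smno_norm n E ends) z"
    unfolding dual_def D2_def[symmetric] using cSup_upper[OF \<open>0 \<in> D2\<close> bdd2] .
  have d2le: "dual E (smno_norm n E ends) z \<le> sqrt 2 * dual E (sm_norm n E ends) z"
    unfolding dual_def D2_def[symmetric] using \<open>0 \<in> D2\<close> ub
    by (intro cSup_least) (auto simp: dual_def)
  have "(dual E (smno_norm n E ends) z)^2 \<le> (sqrt 2 * dual E (sm_norm n E ends) z)^2"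
    using d2le d2nn by (intro power_mono) auto
  also have "\<dots> = 2 * (dual E (sm_norm n E ends) z)^2" by (simp add: power_mult_distrib)
  finally show ?thesis by simp
qed

end
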